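(* Let $1<p<\infty$, $p^*=p/(p-1)$, let $E,F,G$ be Banach spaces, $u\in\mathcal{L}(E;F)$ and $v\in\mathcal{L}(F;G)$. If the adjoint $u^*\colon F^*\to E^*$ is absolutely mid $p^*$-summing and the adjoint $v^*\colon G^*\to F^*$ is weakly mid $p^*$-summing, then $v\circ u$ is Cohen strongly $p$-summing.
   Context: For a Banach space $X$ and $1\le r\le\infty$: $\ell_r(X)$ absolutely $r$-summable sequences; $\ell_r^w(X)$ sequences with $\sup_{x^*\in B_{X^*}}\|(x^*(x_j))_j\|_r<\infty$; for $r<\infty$, $\ell_r^{mid}(X)$ the $(x_j)\in\ell_r^w(X)$ with $\sum_n\sum_j|x_n^*(x_j)|^r<\infty$ for every $(x_n^* )\in\ell_r^w(X^* )$; $\ell_p\langle X\rangle$ the $(x_j)$ with $\sup_{(x_j^* )\in B_{\ell_{p^*}^w(X^* )}}\sum_j|x_j^*(x_j)|<\infty$. A bounded linear $T\colon X\to Y$ is absolutely mid $r$-summing if $(T(x_j))\in\ell_r(Y)$ whenever $(x_j)\in\ell_r^{mid}(X)$; weakly mid $r$-summing if $(T(x_j))\in\ell_r^{mid}(Y)$ whenever $(x_j)\in\ell_r^w(X)$; Cohen strongly $p$-summing if $(T(x_j))\in\ell_p\langle Y\rangle$ whenever $(x_j)\in\ell_p(X)$. *)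

theory Defs
  imports "HOL-Analysis.Analysis"
begin

text \<open>Real Banach spaces are modelled by the type class banach; the dual X* of X
is the type of bounded linear functionals X to real.  All exponents r are
finite reals with r \<ge> 1.\<close>

definition strongly_summable :: "real \<Rightarrow> (nat \<Rightarrow> 'a::real_normed_vector) \<Rightarrow> bool" where
  "strongly_summable r x \<longleftrightarrow> summable (\<lambda>j. norm (x j) powr r)"

definition weak_norm_le :: "real \<Rightarrow> real \<Rightarrow> (nat \<Rightarrow> 'a::real_normed_vector) \<Rightarrow> bool" where
  "weak_norm_le r C x \<longleftrightarrow>
     (\<forall>\<phi> :: 'a \<Rightarrow>\<^sub>L real. norm \<phi> \<le> 1 \<longrightarrow>
        summable (\<lambda>j. \<bar>blinfun_apply \<phi> (x j)\<bar> powr r) \<and> (\<Sum>j. \<bar>blinfun_apply \<phi> (x j)\<bar> powr r) powr (1 / r) \<le> C)"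

definition weakly_summable :: "real \<Rightarrow> (nat \<Rightarrow> 'a::real_normed_vector) \<Rightarrow> bool" where
  "weakly_summable r x \<longleftrightarrow> (\<exists>C. weak_norm_le r C x)"

definition mid_summable :: "real \<Rightarrow> (nat \<Rightarrow> 'a::real_normed_vector) \<Rightarrow> bool" where
  "mid_summable r x \<longleftrightarrow> weakly_summable r x \<and>
     (\<forall>\<phi> :: nat \<Rightarrow> ('a \<Rightarrow>\<^sub>L real). weakly_summable r \<phi> \<longrightarrow>
        (\<forall>n. summable (\<lambda>j. \<bar>blinfun_apply (\<phi> n) (x j)\<bar> powr r)) \<and>
        summable (\<lambda>n. \<Sum>j. \<bar>blinfun_apply (\<phi> n) (x j)\<bar> powr r))"

definition cohen_summable :: "real \<Rightarrow> (nat \<Rightarrow> 'a::real_normed_vector) \<Rightarrow> bool" where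
  "cohen_summable p x \<longleftrightarrow>
     (\<exists>C. \<forall>\<phi> :: nat \<Rightarrow> ('a \<Rightarrow>\<^sub>L real). weak_norm_le (p / (p - 1)) 1 \<phi> \<longrightarrow>
        summable (\<lambda>j. \<bar>blinfun_apply (\<phi> j) (x j)\<bar>) \<and> (\<Sum>j. \<bar>blinfun_apply (\<phi> j) (x j)\<bar>) \<le> C)"

definition absolutely_mid_summing :: "real \<Rightarrow> ('a::real_normed_vector \<Rightarrow> 'b::real_normed_vector) \<Rightarrow> bool" where
  "absolutely_mid_summing r T \<longleftrightarrow> bounded_linear T \<and>
     (\<forall>x. mid_summable r x \<longrightarrow> strongly_summable r (\<lambda>j. T (x j)))"

definition weakly_mid_summing :: "real \<Rightarrow> ('a::real_normed_vector \<Rightarrow> 'b::real_normed_vector) \<Rightarrow> bool" where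
  "weakly_mid_summing r T \<longleftrightarrow> bounded_linear T \<and>
     (\<forall>x. weakly_summable r x \<longrightarrow> mid_summable r (\<lambda>j. T (x j)))"

definition cohen_strongly_summing :: "real \<Rightarrow> ('a::real_normed_vector \<Rightarrow> 'b::real_normed_vector) \<Rightarrow> bool" where
  "cohen_strongly_summing p T \<longleftrightarrow> bounded_linear T \<and>
     (\<forall>x. strongly_summable p x \<longrightarrow> cohen_summable p (\<lambda>j. T (x j)))"

definition adjoint_op :: "('a::real_normed_vector \<Rightarrow>\<^sub>L 'b::real_normed_vector) \<Rightarrow> ('b \<Rightarrow>\<^sub>L real) \<Rightarrow> ('a \<Rightarrow>\<^sub>L real)" where
  "adjoint_op u = (\<lambda>f. f o\<^sub>L u)"

end

theory Submission imports Defs begin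

lemma young_sum_le:
  fixes c t :: "nat \<Rightarrow> real" and q :: real
  assumes q: "q > 1" and c0: "\<And>k. c k \<ge> 0" and t0: "\<And>k. t k \<ge> 0"
    and sc: "summable c" and c1: "suminf c \<le> 1"
    and sT: "summable (\<lambda>k. c k * t k powr q)"
    and ss: "summable (\<lambda>k. c k * t k)"
  shows "(\<Sum>k. c k * t k) powr q \<le> (\<Sum>k. c k * t k powr q)"
proof -
  define T where "T = (\<Sum>k. c k * t k powr q)"
  define s where "s = (\<Sum>k. c k * t k)"
  define r where "r = q / (q - 1)"
  have r1: "r > 1" and rq: "1/r + 1/q = 1" using q by (auto simp: r_def field_simps)
  have T0: "T \<ge> 0" unfolding T_def using sT c0 t0 by (intro suminf_nonneg) auto
  have s0: "s \<ge> 0" unfolding s_def using ss c0 t0 by (intro suminf_nonneg) auto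
  have key: "s \<le> l" if l0: "l > 0" and lT: "T \<le> l powr q" for l
  proof -
    have tm: "c k * t k / l \<le> c k / r + (c k * t k powr q) / (l powr q * q)" for k
    proof -
      have "1 * (t k / l) \<le> 1 powr r / r + (t k / l) powr q / q"
        using Youngs_inequality[OF r1 q rq, of 1 "t k / l"] t0[of k] l0 by simp
      then have "t k / l \<le> 1 / r + t k powr q / (l powr q * q)"
        using l0 t0[of k] by (simp add: powr_divide)
      from mult_left_mono[OF this c0[of k]] show ?thesis
        by (simp add: field_simps)
    qed
    have "(\<Sum>k. c k * t k / l) \<le> (\<Sum>k. c k / r + (c k * t k powr q) / (l powr q * q))"
      apply (rule suminf_le[OF tm])
      using ss sT sc by (auto intro!: summable_add summable_divide)
    also have "\<dots> = suminf c / r + T / (l powr q * q)"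
      unfolding T_def
      apply (subst suminf_add[symmetric])
      using sT sc by (auto intro!: summable_divide simp: suminf_divide)
    also have "\<dots> \<le> 1 / r + 1 / q"
    proof (rule add_mono)
      show "suminf c / r \<le> 1 / r" using c1 r1 by (simp add: divide_right_mono)
      have "T / (l powr q * q) \<le> (l powr q) / (l powr q * q)"
        using lT q l0 by (intro divide_right_mono) auto
      also have "\<dots> = 1 / q" using l0 by simp
      finally show "T / (l powr q * q) \<le> 1 / q" .
    qed
    also have "\<dots> = 1" by (rule rq)
    finally have "(\<Sum>k. c k * t k / l) \<le> 1" .
    moreover have "(\<Sum>k. c k * t k / l) = s / l" unfolding s_def
      using ss by (simp add: suminf_divide)
    ultimately show ?thesis using l0 by (simp add: divide_le_eq)
  qed
  show ?thesis
  proof (cases "T > 0")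
    case True
    have "s \<le> T powr (1/q)" using key[of "T powr (1/q)"] True q by (simp add: powr_powr)
    then have "s powr q \<le> (T powr (1/q)) powr q" using s0 q by (intro powr_mono2) auto
    then show ?thesis using True q by (simp add: powr_powr T_def s_def)
  next
    case False
    then have "T = 0" using T0 by simp
    have "s \<le> e" if "e > 0" for e using key[of e] that \<open>T = 0\<close> by simp
    then have "s \<le> 0" by (meson dense not_le)
    then have "s = 0" using s0 by simp
    then show ?thesis using T0 by (simp add: s_def T_def)
  qed
qed

lemma weak_le_sum:
  assumes "weak_norm_le r 1 \<phi>" "r > 0" "norm \<psi> \<le> 1"
  shows "summable (\<lambda>j. \<bar>blinfun_apply \<psi> (\<phi> j)\<bar> powr r)"
    "(\<Sum>j. \<bar>blinfun_apply \<psi> (\<phi> j)\<bar> powr r) \<le> 1"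
proof -
  from assms(1,3) have s: "summable (\<lambda>j. \<bar>blinfun_apply \<psi> (\<phi> j)\<bar> powr r)"
    and le: "(\<Sum>j. \<bar>blinfun_apply \<psi> (\<phi> j)\<bar> powr r) powr (1/r) \<le> 1"
    unfolding weak_norm_le_def by auto
  show "summable (\<lambda>j. \<bar>blinfun_apply \<psi> (\<phi> j)\<bar> powr r)" by (rule s)
  define S where "S = (\<Sum>j. \<bar>blinfun_apply \<psi> (\<phi> j)\<bar> powr r)"
  have S0: "S \<ge> 0" unfolding S_def using s by (intro suminf_nonneg) auto
  have "S = (S powr (1/r)) powr r" using S0 assms(2) by (simp add: powr_powr)
  also have "\<dots> \<le> 1 powr r" using le S0 assms(2) unfolding S_def by (intro powr_mono2) auto
  finally show "(\<Sum>j. \<bar>blinfun_apply \<psi> (\<phi> j)\<bar> powr r) \<le> 1" by (simp add: S_def)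
qed

lemma weak_le_term:
  fixes \<psi> :: "'a::real_normed_vector \<Rightarrow>\<^sub>L real"
  assumes "weak_norm_le r 1 \<phi>" "r > 0" "norm \<psi> \<le> 1"
  shows "\<bar>blinfun_apply \<psi> (\<phi> j)\<bar> \<le> 1"
proof -
  have "\<bar>blinfun_apply \<psi> (\<phi> j)\<bar> powr r \<le> (\<Sum>j. \<bar>blinfun_apply \<psi> (\<phi> j)\<bar> powr r)"
    using sum_le_suminf[OF weak_le_sum(1)[OF assms], of "{j}"] by auto
  also have "\<dots> \<le> 1" using weak_le_sum(2)[OF assms] .
  finally have h: "\<bar>blinfun_apply \<psi> (\<phi> j)\<bar> powr r \<le> 1" .
  show ?thesis
  proof (rule ccontr)
    assume "\<not> ?thesis"
    then have "1 < \<bar>blinfun_apply \<psi> (\<phi> j)\<bar>" by simp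
    then have "1 powr r < \<bar>blinfun_apply \<psi> (\<phi> j)\<bar> powr r" using assms(2)
      by (intro powr_less_mono2) auto
    then show False using h by simp
  qed
qed

definition ev :: "'a::real_normed_vector \<Rightarrow> ('a \<Rightarrow>\<^sub>L real) \<Rightarrow>\<^sub>L real" where
  "ev g = Blinfun (\<lambda>f. blinfun_apply f g)"

lemma ev_apply[simp]: "blinfun_apply (ev g) f = blinfun_apply f g"
  unfolding ev_def by (simp add: bounded_linear_Blinfun_apply)

lemma norm_ev: "norm (ev g) \<le> norm g"
  by (rule norm_blinfun_bound) (auto, metis mult.commute norm_blinfun real_norm_def)

lemma weak_norm_term:
  fixes \<phi> :: "nat \<Rightarrow> ('a::real_normed_vector \<Rightarrow>\<^sub>L real)"
  assumes "weak_norm_le r 1 \<phi>" "r > 0"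
  shows "norm (\<phi> j) \<le> 1"
proof (rule norm_blinfun_bound)
  fix g
  show "norm (blinfun_apply (\<phi> j) g) \<le> 1 * norm g"
  proof (cases "g = 0")
    case False
    define h where "h = g /\<^sub>R norm g"
    have "norm (ev h) \<le> 1" using norm_ev[of h] False by (simp add: h_def)
    from weak_le_term[OF assms this, of j] have "\<bar>blinfun_apply (\<phi> j) h\<bar> \<le> 1" by simp
    moreover have "blinfun_apply (\<phi> j) g = norm g * blinfun_apply (\<phi> j) h"
      using False by (simp add: h_def blinfun.scaleR_right)
    ultimately show ?thesis by (simp add: abs_mult mult_left_le)
  qed simp
qed simp

lemma qual:
  fixes p :: real
    and u :: "'e::banach \<Rightarrow>\<^sub>L 'f::banach"
    and v :: "'f \<Rightarrow>\<^sub>L 'g::banach"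
    and \<phi> :: "nat \<Rightarrow> ('g \<Rightarrow>\<^sub>L real)"
  assumes p: "1 < p"
    and au: "absolutely_mid_summing (p / (p - 1)) (adjoint_op u)"
    and wv: "weakly_mid_summing (p / (p - 1)) (adjoint_op v)"
    and x: "strongly_summable p x"
    and \<phi>: "weakly_summable (p / (p - 1)) \<phi>"
  shows "summable (\<lambda>j. \<bar>blinfun_apply (\<phi> j) (v (u (x j)))\<bar>)"
proof -
  define q where "q = p / (p - 1)"
  have q1: "q > 1" and pq: "1/p + 1/q = 1" using p by (auto simp: q_def field_simps)
  have mid: "mid_summable q (\<lambda>j. adjoint_op v (\<phi> j))"
    using wv \<phi> unfolding weakly_mid_summing_def q_def by auto
  then have "strongly_summable q (\<lambda>j. adjoint_op u (adjoint_op v (\<phi> j)))"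
    using au unfolding absolutely_mid_summing_def q_def by auto
  then have s1: "summable (\<lambda>j. norm ((\<phi> j o\<^sub>L v) o\<^sub>L u) powr q)"
    unfolding strongly_summable_def adjoint_op_def .
  have s2: "summable (\<lambda>j. norm (x j) powr p)" using x unfolding strongly_summable_def .
  show ?thesis
  proof (rule summable_comparison_test'[where N=0])
    show "summable (\<lambda>j. norm (x j) powr p / p + norm ((\<phi> j o\<^sub>L v) o\<^sub>L u) powr q / q)"
      using s1 s2 by (intro summable_add summable_divide)
    fix j :: nat
    have "norm \<bar>blinfun_apply (\<phi> j) (v (u (x j)))\<bar> = norm (blinfun_apply ((\<phi> j o\<^sub>L v) o\<^sub>L u) (x j))"
      by simp
    also have "\<dots> \<le> norm ((\<phi> j o\<^sub>L v) o\<^sub>L u) * norm (x j)" by (rule norm_blinfun)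
    also have "\<dots> = norm (x j) * norm ((\<phi> j o\<^sub>L v) o\<^sub>L u)" by simp
    also have "\<dots> \<le> norm (x j) powr p / p + norm ((\<phi> j o\<^sub>L v) o\<^sub>L u) powr q / q"
      by (rule Youngs_inequality[OF p q1 pq]) auto
    finally show "norm \<bar>blinfun_apply (\<phi> j) (v (u (x j)))\<bar>
        \<le> norm (x j) powr p / p + norm ((\<phi> j o\<^sub>L v) o\<^sub>L u) powr q / q" .
  qed
qed

lemma main:
  fixes p :: real
    and u :: "'e::banach \<Rightarrow>\<^sub>L 'f::banach"
    and v :: "'f \<Rightarrow>\<^sub>L 'g::banach"
  assumes p: "1 < p"
    and au: "absolutely_mid_summing (p / (p - 1)) (adjoint_op u)"
    and wv: "weakly_mid_summing (p / (p - 1)) (adjoint_op v)"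
    and x: "strongly_summable p x"
  shows "cohen_summable p (\<lambda>j. v (u (x j)))"
proof -
  define q where "q = p / (p - 1)"
  have q1: "q > 1" using p by (auto simp: q_def field_simps)
  define y where "y j = v (u (x j))" for j
  have Q: "summable (\<lambda>j. \<bar>blinfun_apply (\<phi> j) (y j)\<bar>)" if wk: "weak_norm_le q 1 \<phi>" for \<phi> :: "nat \<Rightarrow> ('g \<Rightarrow>\<^sub>L real)"
  proof -
    have "weakly_summable (p/(p-1)) \<phi>" unfolding weakly_summable_def q_def[symmetric]
      using wk by (rule exI)
    from qual[OF p au wv x this] show ?thesis unfolding y_def .
  qed
  show ?thesis unfolding cohen_summable_def q_def[symmetric] y_def[symmetric]
  proof (rule ccontr)
    assume nC: "\<not> (\<exists>C. \<forall>\<phi> :: nat \<Rightarrow> ('g \<Rightarrow>\<^sub>L real). weak_norm_le q 1 \<phi> \<longrightarrow>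
        summable (\<lambda>j. \<bar>blinfun_apply (\<phi> j) (y j)\<bar>) \<and> (\<Sum>j. \<bar>blinfun_apply (\<phi> j) (y j)\<bar>) \<le> C)"
    have "\<forall>k::nat. \<exists>\<phi> :: nat \<Rightarrow> ('g \<Rightarrow>\<^sub>L real). weak_norm_le q 1 \<phi> \<and> (\<Sum>j. \<bar>blinfun_apply (\<phi> j) (y j)\<bar>) > 4^k"
    proof
      fix k :: nat
      show "\<exists>\<phi> :: nat \<Rightarrow> ('g \<Rightarrow>\<^sub>L real). weak_norm_le q 1 \<phi> \<and> (\<Sum>j. \<bar>blinfun_apply (\<phi> j) (y j)\<bar>) > 4^k"
      proof (rule ccontr)
        assume nn: "\<not> (\<exists>\<phi> :: nat \<Rightarrow> ('g \<Rightarrow>\<^sub>L real). weak_norm_le q 1 \<phi> \<and> (\<Sum>j. \<bar>blinfun_apply (\<phi> j) (y j)\<bar>) > 4^k)"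
        have "\<forall>\<phi> :: nat \<Rightarrow> ('g \<Rightarrow>\<^sub>L real). weak_norm_le q 1 \<phi> \<longrightarrow>
          summable (\<lambda>j. \<bar>blinfun_apply (\<phi> j) (y j)\<bar>) \<and> (\<Sum>j. \<bar>blinfun_apply (\<phi> j) (y j)\<bar>) \<le> 4^k"
        proof (intro allI impI conjI)
          fix \<phi> :: "nat \<Rightarrow> ('g \<Rightarrow>\<^sub>L real)"
          assume a: "weak_norm_le q 1 \<phi>"
          show "summable (\<lambda>j. \<bar>blinfun_apply (\<phi> j) (y j)\<bar>)" by (rule Q[OF a])
          show "(\<Sum>j. \<bar>blinfun_apply (\<phi> j) (y j)\<bar>) \<le> 4^k"
          proof (rule ccontr)
            assume "\<not> (\<Sum>j. \<bar>blinfun_apply (\<phi> j) (y j)\<bar>) \<le> 4^k"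
            then have "(\<Sum>j. \<bar>blinfun_apply (\<phi> j) (y j)\<bar>) > 4^k" by (simp only: not_le)
            with a have "\<exists>\<phi> :: nat \<Rightarrow> ('g \<Rightarrow>\<^sub>L real). weak_norm_le q 1 \<phi> \<and> (\<Sum>j. \<bar>blinfun_apply (\<phi> j) (y j)\<bar>) > 4^k"
              by (intro exI[of _ \<phi>] conjI)
            with nn show False by (rule notE)
          qed
        qed
        then have "\<exists>C. \<forall>\<phi> :: nat \<Rightarrow> ('g \<Rightarrow>\<^sub>L real). weak_norm_le q 1 \<phi> \<longrightarrow>
          summable (\<lambda>j. \<bar>blinfun_apply (\<phi> j) (y j)\<bar>) \<and> (\<Sum>j. \<bar>blinfun_apply (\<phi> j) (y j)\<bar>) \<le> C"
          by (rule exI)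
        with nC show False by (rule notE)
      qed
    qed
    from choice[OF this] obtain F :: "nat \<Rightarrow> nat \<Rightarrow> ('g \<Rightarrow>\<^sub>L real)" where
      FF: "\<forall>k. weak_norm_le q 1 (F k) \<and> (\<Sum>j. \<bar>blinfun_apply (F k j) (y j)\<bar>) > 4^k" ..
    have Fw: "\<And>k. weak_norm_le q 1 (F k)" and Fb: "\<And>k. (\<Sum>j. \<bar>blinfun_apply (F k j) (y j)\<bar>) > 4^k"
      using FF by simp_all
    define \<theta> where "\<theta> k j = (if blinfun_apply (F k j) (y j) \<ge> 0 then 1 else -1::real) *\<^sub>R F k j" for k j
    have \<theta>y: "blinfun_apply (\<theta> k j) (y j) = \<bar>blinfun_apply (F k j) (y j)\<bar>" for k j
      by (simp add: \<theta>_def uminus_blinfun.rep_eq)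
    have \<theta>\<psi>: "\<bar>blinfun_apply \<psi> (\<theta> k j)\<bar> = \<bar>blinfun_apply \<psi> (F k j)\<bar>" for \<psi> :: "('g \<Rightarrow>\<^sub>L real) \<Rightarrow>\<^sub>L real" and k j
      by (simp add: \<theta>_def blinfun.scaleR_right)
    have \<theta>w: "weak_norm_le q 1 (\<theta> k)" for k
      using Fw[of k] unfolding weak_norm_le_def \<theta>\<psi> .
    have \<theta>n: "norm (\<theta> k j) \<le> 1" for k j
      using weak_norm_term[OF \<theta>w] q1 by simp
    define c where "c k = (1/2::real)^Suc k" for k
    have c0: "c k \<ge> 0" for k by (simp add: c_def)
    have sc: "summable c" unfolding c_def by (simp add: summable_mult)
    have c1: "suminf c = 1" unfolding c_def power_Suc
      by (subst suminf_mult) (auto simp: suminf_geometric)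
    have s\<theta>: "summable (\<lambda>k. c k *\<^sub>R \<theta> k j)" for j
    proof (rule summable_comparison_test'[where N=0, OF sc])
      fix k
      show "norm (c k *\<^sub>R \<theta> k j) \<le> c k"
        using \<theta>n[of k j] c0[of k] by (simp add: mult_left_le)
    qed
    define \<Phi> where "\<Phi> j = (\<Sum>k. c k *\<^sub>R \<theta> k j)" for j
    have \<Phi>app: "L (\<Phi> j) = (\<Sum>k. c k * L (\<theta> k j))" "summable (\<lambda>k. c k * L (\<theta> k j))"
      if L: "bounded_linear (L :: ('g \<Rightarrow>\<^sub>L real) \<Rightarrow> real)" for L j
    proof -
      show "L (\<Phi> j) = (\<Sum>k. c k * L (\<theta> k j))"
        unfolding \<Phi>_def using bounded_linear.suminf[OF L s\<theta>[of j]]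
        by (simp add: linear_simps(5)[OF L])
      show "summable (\<lambda>k. c k * L (\<theta> k j))"
        using bounded_linear.summable[OF L s\<theta>[of j]]
        by (simp add: linear_simps(5)[OF L])
    qed
    have \<Phi>w: "weak_norm_le q 1 \<Phi>"
      unfolding weak_norm_le_def
    proof (intro allI impI conjI)
      fix \<psi> :: "('g \<Rightarrow>\<^sub>L real) \<Rightarrow>\<^sub>L real"
      assume \<psi>: "norm \<psi> \<le> 1"
      define b where "b k j = blinfun_apply \<psi> (\<theta> k j)" for k j
      have bs: "summable (\<lambda>j. \<bar>b k j\<bar> powr q)" "(\<Sum>j. \<bar>b k j\<bar> powr q) \<le> 1" for k
        using weak_le_sum[OF \<theta>w _ \<psi>] q1 unfolding b_def by auto
      have b1: "\<bar>b k j\<bar> \<le> 1" for k j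
        using weak_le_term[OF \<theta>w _ \<psi>] q1 unfolding b_def by auto
      have bq1: "\<bar>b k j\<bar> powr q \<le> 1" for k j
        using powr_mono2[of q "\<bar>b k j\<bar>" 1] b1[of k j] q1 by simp
      have \<psi>\<Phi>: "blinfun_apply \<psi> (\<Phi> j) = (\<Sum>k. c k * b k j)" "summable (\<lambda>k. c k * b k j)" for j
        using \<Phi>app[OF blinfun.bounded_linear_right[of \<psi>]] unfolding b_def by auto
      define T where "T j = (\<Sum>k. c k * \<bar>b k j\<bar> powr q)" for j
      have sT: "summable (\<lambda>k. c k * \<bar>b k j\<bar> powr q)" for j
        by (rule summable_comparison_test'[where N=0, OF sc])
           (use bq1 c0 in \<open>auto intro: mult_left_le\<close>)
      have sa: "summable (\<lambda>k. c k * \<bar>b k j\<bar>)" for j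
        by (rule summable_comparison_test'[where N=0, OF sc])
           (use b1 c0 in \<open>auto intro: mult_left_le\<close>)
      have le1: "\<bar>blinfun_apply \<psi> (\<Phi> j)\<bar> powr q \<le> T j" for j
      proof -
        have "\<bar>blinfun_apply \<psi> (\<Phi> j)\<bar> \<le> (\<Sum>k. c k * \<bar>b k j\<bar>)"
          unfolding \<psi>\<Phi>(1) using summable_rabs[of "\<lambda>k. c k * b k j"] sa[of j] c0
          by (simp add: abs_mult)
        then have "\<bar>blinfun_apply \<psi> (\<Phi> j)\<bar> powr q \<le> (\<Sum>k. c k * \<bar>b k j\<bar>) powr q"
          using q1 by (intro powr_mono2) auto
        also have "\<dots> \<le> T j" unfolding T_def
          by (rule young_sum_le[OF q1 c0 _ sc _ sT sa]) (auto simp: c1)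
        finally show ?thesis .
      qed
      have T0: "T j \<ge> 0" for j unfolding T_def using sT c0 by (intro suminf_nonneg) auto
      have Tpart: "(\<Sum>j<N. T j) \<le> 1" for N
      proof -
        have "(\<Sum>j<N. T j) = (\<Sum>k. \<Sum>j<N. c k * \<bar>b k j\<bar> powr q)"
          unfolding T_def by (rule suminf_sum[symmetric]) (rule sT)
        also have "\<dots> \<le> (\<Sum>k. c k)"
        proof (rule suminf_le)
          fix k
          have "(\<Sum>j<N. \<bar>b k j\<bar> powr q) \<le> (\<Sum>j. \<bar>b k j\<bar> powr q)"
            using bs(1)[of k] by (intro sum_le_suminf) auto
          also have "\<dots> \<le> 1" by (rule bs(2))
          finally show "(\<Sum>j<N. c k * \<bar>b k j\<bar> powr q) \<le> c k"
            using c0[of k] by (simp add: sum_distrib_left[symmetric] mult_left_le)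
        next
          show "summable (\<lambda>k. \<Sum>j<N. c k * \<bar>b k j\<bar> powr q)"
            by (intro summable_sum sT)
        qed (rule sc)
        finally show ?thesis using c1 by simp
      qed
      have sTT: "summable T" by (rule summableI_nonneg_bounded[OF T0 Tpart])
      have TT1: "suminf T \<le> 1" by (rule suminf_le_const[OF sTT Tpart])
      show s\<Phi>: "summable (\<lambda>j. \<bar>blinfun_apply \<psi> (\<Phi> j)\<bar> powr q)"
        by (rule summable_comparison_test'[where N=0, OF sTT]) (use le1 in auto)
      have "(\<Sum>j. \<bar>blinfun_apply \<psi> (\<Phi> j)\<bar> powr q) \<le> suminf T"
        by (rule suminf_le[OF le1 s\<Phi> sTT])
      also have "\<dots> \<le> 1" by (rule TT1)
      finally have "(\<Sum>j. \<bar>blinfun_apply \<psi> (\<Phi> j)\<bar> powr q) \<le> 1" .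
      then have "(\<Sum>j. \<bar>blinfun_apply \<psi> (\<Phi> j)\<bar> powr q) powr (1/q) \<le> 1 powr (1/q)"
        using q1 s\<Phi> by (intro powr_mono2 suminf_nonneg) auto
      then show "(\<Sum>j. \<bar>blinfun_apply \<psi> (\<Phi> j)\<bar> powr q) powr (1/q) \<le> 1" by simp
    qed
    have sS: "summable (\<lambda>j. \<bar>blinfun_apply (\<Phi> j) (y j)\<bar>)" by (rule Q[OF \<Phi>w])
    define S where "S = (\<Sum>j. \<bar>blinfun_apply (\<Phi> j) (y j)\<bar>)"
    have big: "S > 2^k / 2" for k :: nat
    proof -
      have ev: "blinfun_apply (\<Phi> j) (y j) = (\<Sum>k. c k * \<bar>blinfun_apply (F k j) (y j)\<bar>)"
        "summable (\<lambda>k. c k * \<bar>blinfun_apply (F k j) (y j)\<bar>)" for j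
        using \<Phi>app[OF bounded_linear_apply_blinfun[of "y j"], of j] unfolding \<theta>y by auto
      have ge: "c k * \<bar>blinfun_apply (F k j) (y j)\<bar> \<le> \<bar>blinfun_apply (\<Phi> j) (y j)\<bar>" for j
      proof -
        have "c k * \<bar>blinfun_apply (F k j) (y j)\<bar> \<le> (\<Sum>k. c k * \<bar>blinfun_apply (F k j) (y j)\<bar>)"
          using sum_le_suminf[OF ev(2)[of j], of "{k}"] c0 by auto
        then show ?thesis using ev(1)[of j] by simp
      qed
      have sF: "summable (\<lambda>j. \<bar>blinfun_apply (F k j) (y j)\<bar>)" by (rule Q[OF Fw])
      have "c k * (\<Sum>j. \<bar>blinfun_apply (F k j) (y j)\<bar>) = (\<Sum>j. c k * \<bar>blinfun_apply (F k j) (y j)\<bar>)"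
        using suminf_mult[OF sF] by simp
      also have "\<dots> \<le> S" unfolding S_def
        by (rule suminf_le[OF ge summable_mult[OF sF] sS])
      finally have "c k * (\<Sum>j. \<bar>blinfun_apply (F k j) (y j)\<bar>) \<le> S" .
      moreover have "c k * 4^k < c k * (\<Sum>j. \<bar>blinfun_apply (F k j) (y j)\<bar>)"
        using Fb[of k] by (simp add: c_def)
      moreover have "c k * 4^k = 2^k / 2"
      proof -
        have "(4::real)^k = 2^k * 2^k" by (simp flip: power_mult_distrib)
        then show ?thesis by (simp add: c_def power_divide)
      qed
      ultimately show ?thesis by simp
    qed
    obtain n :: nat where "2 * S < real n" using reals_Archimedean2 by blast
    moreover have "real n < 2^n"
    proof -
      have "n < 2^n" by (rule less_exp)
      then have "real n < real (2^n)" by (simp only: of_nat_less_iff)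
      then show ?thesis by simp
    qed
    ultimately show False using big[of n] by simp
  qed
qed



theorem corollary2p11:
  fixes p :: real
    and u :: "'e::banach \<Rightarrow>\<^sub>L 'f::banach"
    and v :: "'f \<Rightarrow>\<^sub>L 'g::banach"
  assumes "1 < p"
    and "absolutely_mid_summing (p / (p - 1)) (adjoint_op u)"
    and "weakly_mid_summing (p / (p - 1)) (adjoint_op v)"
  shows "cohen_strongly_summing p (blinfun_apply (v o\<^sub>L u))"
  unfolding cohen_strongly_summing_def
  using main[OF assms] by (simp add: blinfun.bounded_linear_right)

end
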